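(* Let $\phi$ be a cocycle with respect to $\theta$ on $\mathbb{R}^+\times\Sigma\times X$ having a bounded pullback absorbing set $\{B_\sigma\}_{\sigma\in\Sigma}$ (not necessarily nested). Assume that for every $\varepsilon>0$ and every $\sigma\in\Sigma$ there exist $T=T(\sigma,\varepsilon)\ge0$ and a function $\psi_{T,\sigma}\in\mathrm{Contr}(B_{\theta_{-T}(\sigma)})$ such that $$\|\phi(T,\theta_{-T}(\sigma);x)-\phi(T,\theta_{-T}(\sigma);y)\|\le\varepsilon+\psi_{T,\sigma}(x,y)\quad\text{for all }x,y\in B_{\theta_{-T}(\sigma)}.$$ Then $\phi$ is pullback asymptotically compact.
   Context: Let $X$ be a Banach space with norm $\|\cdot\|$. Let $\Sigma$ be a set and $\theta=\{\theta_t\}_{t\in\mathbb{R}}$ a group of bijections $\theta_t:\Sigma\to\Sigma$ with $\theta_0=\mathrm{id}$ and $\theta_{t+\tau}=\theta_t\circ\theta_\tau$. A cocycle with respect to $\theta$ is a map $\phi:\mathbb{R}^+\times\Sigma\times X\to X$ with $\phi(0,\sigma;x)=x$ and $\phi(s+t,\sigma;x)=\phi(s,\theta_t(\sigma);\phi(t,\sigma;x))$ for all $s,t\ge 0$. For $B\subset X$, $\phi(t,\sigma;B)=\{\phi(t,\sigma;x):x\in B\}$. A bounded pullback absorbing set is a family $\{B_\sigma\}_{\sigma\in\Sigma}$ of bounded subsets of $X$ such that for every $\sigma$ and bounded $B\subset X$ there is $T\ge0$ with $\phi(t,\theta_{-t}(\sigma);B)\subset B_\sigma$ for all $t\ge T$.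 For a bounded set $B\subset X$, $\mathrm{Contr}(B)$ denotes the set of functions $\psi:X\times X\to\mathbb{R}$ such that every sequence $\{x_n\}\subset B$ has a subsequence $\{x_{n_k}\}$ with $\lim_{k\to\infty}\lim_{l\to\infty}\psi(x_{n_k},x_{n_l})=0$. $\phi$ is pullback asymptotically compact if for each $\sigma\in\Sigma$, every bounded sequence $\{x_n\}\subset X$ and every $\{t_n\}\subset\mathbb{R}^+$ with $t_n\to+\infty$, the sequence $\{\phi(t_n,\theta_{-t_n}(\sigma);x_n)\}$ is precompact in $X$. *)

theory Defs
  imports "HOL-Analysis.Analysis"
begin

definition is_group_of_bijections :: "(real \<Rightarrow> 's \<Rightarrow> 's) \<Rightarrow> bool" where
  "is_group_of_bijections \<theta> \<longleftrightarrow>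
     (\<forall>t. bij (\<theta> t)) \<and> \<theta> 0 = id \<and> (\<forall>t \<tau>. \<theta> (t + \<tau>) = \<theta> t \<circ> \<theta> \<tau>)"

text \<open>Only the values of phi at nonnegative times are relevant.\<close>
definition is_cocycle :: "(real \<Rightarrow> 's \<Rightarrow> 's) \<Rightarrow> (real \<Rightarrow> 's \<Rightarrow> 'x \<Rightarrow> 'x) \<Rightarrow> bool" where
  "is_cocycle \<theta> \<phi> \<longleftrightarrow>
     (\<forall>\<sigma> x. \<phi> 0 \<sigma> x = x) \<and>
     (\<forall>s t \<sigma> x. s \<ge> 0 \<longrightarrow> t \<ge> 0 \<longrightarrow> \<phi> (s + t) \<sigma> x = \<phi> s (\<theta> t \<sigma>) (\<phi> t \<sigma> x))"

definition bounded_pullback_absorbing ::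
  "(real \<Rightarrow> 's \<Rightarrow> 's) \<Rightarrow> (real \<Rightarrow> 's \<Rightarrow> 'x::real_normed_vector \<Rightarrow> 'x) \<Rightarrow> ('s \<Rightarrow> 'x set) \<Rightarrow> bool" where
  "bounded_pullback_absorbing \<theta> \<phi> B \<longleftrightarrow>
     (\<forall>\<sigma>. bounded (B \<sigma>)) \<and>
     (\<forall>\<sigma> D. bounded D \<longrightarrow>
        (\<exists>T\<ge>0. \<forall>t\<ge>T. \<phi> t (\<theta> (-t) \<sigma>) ` D \<subseteq> B \<sigma>))"

definition Contr :: "'x set \<Rightarrow> ('x \<Rightarrow> 'x \<Rightarrow> real) set" where
  "Contr B = {\<psi>. \<forall>x::nat \<Rightarrow> 'x. (\<forall>n. x n \<in> B) \<longrightarrow>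
      (\<exists>r. strict_mono r \<and>
         (\<exists>L. (\<forall>k. (\<lambda>l. \<psi> (x (r k)) (x (r l))) \<longlonglongrightarrow> L k) \<and> L \<longlonglongrightarrow> 0))}"

definition pullback_asymptotically_compact ::
  "(real \<Rightarrow> 's \<Rightarrow> 's) \<Rightarrow> (real \<Rightarrow> 's \<Rightarrow> 'x::real_normed_vector \<Rightarrow> 'x) \<Rightarrow> bool" where
  "pullback_asymptotically_compact \<theta> \<phi> \<longleftrightarrow>
     (\<forall>\<sigma> (x::nat \<Rightarrow> 'x) (t::nat \<Rightarrow> real).
        bounded (range x) \<longrightarrow> (\<forall>n. t n \<ge> 0) \<longrightarrow> filterlim t at_top sequentially \<longrightarrow>
        compact (closure (range (\<lambda>n. \<phi> (t n) (\<theta> (- t n) \<sigma>) (x n)))))"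

end

theory Submission
  imports Defs
begin

theorem corollary4p3:
  fixes \<theta> :: "real \<Rightarrow> 's \<Rightarrow> 's"
    and \<phi> :: "real \<Rightarrow> 's \<Rightarrow> 'x::banach \<Rightarrow> 'x"
    and B :: "'s \<Rightarrow> 'x set"
  assumes "is_group_of_bijections \<theta>"
    and "is_cocycle \<theta> \<phi>"
    and "bounded_pullback_absorbing \<theta> \<phi> B"
    and "\<forall>\<epsilon>>0. \<forall>\<sigma>. \<exists>T\<ge>0. \<exists>\<psi> \<in> Contr (B (\<theta> (-T) \<sigma>)).
           \<forall>x\<in>B (\<theta> (-T) \<sigma>). \<forall>y\<in>B (\<theta> (-T) \<sigma>).
             norm (\<phi> T (\<theta> (-T) \<sigma>) x - \<phi> T (\<theta> (-T) \<sigma>) y) \<le> \<epsilon> + \<psi> x y"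
  shows "pullback_asymptotically_compact \<theta> \<phi>"
  unfolding pullback_asymptotically_compact_def
proof (intro allI impI)
  fix \<sigma> and x :: "nat \<Rightarrow> 'x" and t :: "nat \<Rightarrow> real"
  assume bx: "bounded (range x)" and t0: "\<forall>n. t n \<ge> 0" and tl: "filterlim t at_top sequentially"
  have grp: "\<And>a b s. \<theta> a (\<theta> b s) = \<theta> (a + b) s"
    using assms(1) unfolding is_group_of_bijections_def by simp
  have coc: "\<And>s t' \<sigma> x. s \<ge> 0 \<Longrightarrow> t' \<ge> 0 \<Longrightarrow> \<phi> (s + t') \<sigma> x = \<phi> s (\<theta> t' \<sigma>) (\<phi> t' \<sigma> x)"
    using assms(2) unfolding is_cocycle_def by blast
  define y where "y n = \<phi> (t n) (\<theta> (- t n) \<sigma>) (x n)" for n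
  have tb: "Met_TC.mtotally_bounded (range y)"
    unfolding Met_TC.mtotally_bounded_def mball_eq_ball
  proof (intro allI impI)
    fix \<epsilon> :: real assume ep: "\<epsilon> > 0"
    then have "\<epsilon>/4 > 0" by simp
    then obtain T \<psi> where T: "T \<ge> 0" and psi: "\<psi> \<in> Contr (B (\<theta> (-T) \<sigma>))"
      and H: "\<forall>a\<in>B (\<theta> (-T) \<sigma>). \<forall>b\<in>B (\<theta> (-T) \<sigma>).
             norm (\<phi> T (\<theta> (-T) \<sigma>) a - \<phi> T (\<theta> (-T) \<sigma>) b) \<le> \<epsilon>/4 + \<psi> a b"
      using assms(4)[rule_format, OF \<open>\<epsilon>/4 > 0\<close>, of \<sigma>] by blast
    obtain T0 where T0: "T0 \<ge> 0" "\<forall>s\<ge>T0. \<phi> s (\<theta> (-s) (\<theta> (-T) \<sigma>)) ` range x \<subseteq> B (\<theta> (-T) \<sigma>)"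
      using assms(3)[unfolded bounded_pullback_absorbing_def, THEN conjunct2, rule_format, OF bx] by blast
    have "eventually (\<lambda>n. t n \<ge> T + T0) sequentially"
      using tl by (simp add: filterlim_at_top)
    then obtain N where N: "\<And>n. n \<ge> N \<Longrightarrow> t n \<ge> T + T0"
      unfolding eventually_sequentially by blast
    define z where "z n = \<phi> (t n - T) (\<theta> (- t n) \<sigma>) (x n)" for n
    have zB: "z n \<in> B (\<theta> (-T) \<sigma>)" if "n \<ge> N" for n
    proof -
      have "t n - T \<ge> T0" using N[OF that] by simp
      then have "\<phi> (t n - T) (\<theta> (-(t n - T)) (\<theta> (-T) \<sigma>)) (x n) \<in> B (\<theta> (-T) \<sigma>)"
        using T0(2) by blast
      moreover have "\<theta> (-(t n - T)) (\<theta> (-T) \<sigma>) = \<theta> (- t n) \<sigma>"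
        by (simp add: grp)
      ultimately show ?thesis unfolding z_def by simp
    qed
    have yz: "y n = \<phi> T (\<theta> (-T) \<sigma>) (z n)" if "n \<ge> N" for n
    proof -
      have "t n - T \<ge> 0" using N[OF that] T0 by simp
      then have "\<phi> (T + (t n - T)) (\<theta> (- t n) \<sigma>) (x n) = \<phi> T (\<theta> (t n - T) (\<theta> (- t n) \<sigma>)) (z n)"
        unfolding z_def using coc T by blast
      moreover have "\<theta> (t n - T) (\<theta> (- t n) \<sigma>) = \<theta> (-T) \<sigma>" by (simp add: grp)
      ultimately show ?thesis unfolding y_def by simp
    qed
    have dyz: "dist (y n) (y m) \<le> \<epsilon>/4 + \<psi> (z n) (z m)" if "n \<ge> N" "m \<ge> N" for n m
      using H zB[OF that(1)] zB[OF that(2)] yz[OF that(1)] yz[OF that(2)] by (simp add: dist_norm)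
    show "\<exists>K. finite K \<and> K \<subseteq> range y \<and> range y \<subseteq> (\<Union>x\<in>K. ball x \<epsilon>)"
    proof (rule ccontr)
      assume nc: "\<not> ?thesis"
      have ex: "\<exists>n\<ge>N. \<forall>q\<in>K. dist q (y n) \<ge> \<epsilon>" if "finite K" "K \<subseteq> range y" for K
      proof (rule ccontr)
        assume "\<not> ?thesis"
        then have cov: "\<forall>n\<ge>N. \<exists>q\<in>K. dist q (y n) < \<epsilon>" by (meson not_le)
        have "range y \<subseteq> (\<Union>x\<in>K \<union> y ` {..<N}. ball x \<epsilon>)"
        proof
          fix w assume "w \<in> range y"
          then obtain n where w: "w = y n" by auto
          show "w \<in> (\<Union>x\<in>K \<union> y ` {..<N}. ball x \<epsilon>)"
          proof (cases "n < N")
            case True then have "w \<in> ball (y n) \<epsilon>" using w ep by simp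
            moreover have "y n \<in> K \<union> y ` {..<N}" using True by simp
            ultimately show ?thesis by (rule UN_I[rotated])
          next
            case False
            then obtain q where "q \<in> K" "dist q (y n) < \<epsilon>" using cov by (meson not_less)
            then show ?thesis using w by (intro UN_I[of q]) auto
          qed
        qed
        moreover have "finite (K \<union> y ` {..<N})" using that(1) by simp
        moreover have "K \<union> y ` {..<N} \<subseteq> range y" using that(2) by blast
        ultimately have "\<exists>K'. finite K' \<and> K' \<subseteq> range y \<and> range y \<subseteq> (\<Union>x\<in>K'. ball x \<epsilon>)"
          by (intro exI[of _ "K \<union> y ` {..<N}"] conjI)
        then show False using nc by (rule notE[rotated])
      qed
      let ?Q = "\<lambda>p j n. n \<ge> N \<and> (\<forall>i<j. dist (y (p i)) (y n) \<ge> \<epsilon>)"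
      have "\<exists>p. \<forall>j::nat. ?Q p j (p j)"
      proof (rule dependent_wellorder_choice)
        fix j :: nat and p :: "nat \<Rightarrow> nat"
        obtain n where "n \<ge> N" "\<forall>q\<in>y ` p ` {..<j}. dist q (y n) \<ge> \<epsilon>"
          using ex[of "y ` p ` {..<j}"] by blast
        then show "\<exists>r. ?Q p j r" by auto
      qed simp
      then obtain p :: "nat \<Rightarrow> nat" where pQ: "\<forall>j. ?Q p j (p j)" by blast
      have pN: "\<And>j. p j \<ge> N" using pQ by blast
      have psep: "\<And>i j. i < j \<Longrightarrow> dist (y (p i)) (y (p j)) \<ge> \<epsilon>" using pQ by blast
      have "\<forall>n. z (p n) \<in> B (\<theta> (-T) \<sigma>)" using zB pN by blast
      then obtain r L where r: "strict_mono r"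
        and L: "\<And>k. (\<lambda>l. \<psi> (z (p (r k))) (z (p (r l)))) \<longlonglongrightarrow> L k" and L0: "L \<longlonglongrightarrow> 0"
        using psi[unfolded Contr_def, simplified, rule_format, of "\<lambda>n. z (p n)"] by blast
      have "eventually (\<lambda>k. dist (L k) 0 < \<epsilon>/4) sequentially"
        using L0 \<open>\<epsilon>/4 > 0\<close> by (rule tendstoD)
      then obtain k where k: "\<bar>L k\<bar> < \<epsilon>/4"
        by (metis (no_types, lifting) dist_real_def diff_zero eventually_sequentially order_refl)
      have "eventually (\<lambda>l. dist (\<psi> (z (p (r k))) (z (p (r l)))) (L k) < \<epsilon>/4) sequentially"
        using L \<open>\<epsilon>/4 > 0\<close> by (rule tendstoD)
      then obtain M where M: "\<And>l. l \<ge> M \<Longrightarrow> dist (\<psi> (z (p (r k))) (z (p (r l)))) (L k) < \<epsilon>/4"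
        unfolding eventually_sequentially by blast
      define l where "l = max M (Suc k)"
      have "\<psi> (z (p (r k))) (z (p (r l))) < \<epsilon>/2"
      proof -
        have "dist (\<psi> (z (p (r k))) (z (p (r l)))) (L k) < \<epsilon>/4" using M[of l] unfolding l_def by simp
        then show ?thesis using k unfolding dist_real_def by linarith
      qed
      then have "dist (y (p (r k))) (y (p (r l))) < \<epsilon>"
        using dyz[OF pN pN, of "r k" "r l"] ep by linarith
      moreover have "r k < r l" using r unfolding l_def strict_mono_def by simp
      ultimately show False using psep by (meson not_le)
    qed
  qed
  have "complete (UNIV :: 'x set)" by (simp add: complete_UNIV)
  then show "compact (closure (range (\<lambda>n. \<phi> (t n) (\<theta> (- t n) \<sigma>) (x n))))"
    using tb Met_TC.mtotally_bounded_eq_compact_closure_of[of "range y"]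
    unfolding y_def by simp
qed

end
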